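(* Let $T$ be a well-formed trace and let $e,f$ be two conflicting write events of $T$. If there exists a correctly reordered prefix of $T$ in which $e$ appears immediately before $f$, then there also exists a correctly reordered prefix of $T$ in which $f$ appears immediately before $e$.
   Context: Traces. A trace $T$ is a finite sequence of pairwise distinct events. Each event $e$ belongs to a thread $\mathrm{tid}(e)$ and is one of: a read $r(x)$ or write $w(x)$ of a shared variable $x$, or an acquire $acq(y)$ or release $rel(y)$ of a lock $y$. The projection of $T$ onto thread $i$ is the subsequence of events of thread $i$. $T$ is well-formed if a thread only acquires a lock not currently held and every release $rel(y)$ in thread $i$ has a matching earlier acquire $acq(y)$ in thread $i$ with no other acquire on $y$ in between. Two events are conflicting if they are reads/writes on the same variable, at least one is a write, and they belong to different threads. For a read $e$ on $x$, a write $f$ on $x$ is the last write of $e$ w.r.t. $T$ if $f$ precedes $e$ in $T$ and no other write on $x$ lies strictly between them. Correct reordering. $T'$ is a correctly reordered prefix of $T$ if $T'$ is a sequence of some of the events of $T$ such that: (i) for every thread $i$, the projection of $T'$ onto $i$ is a prefix of the projection of $T$ onto $i$; (ii) for every read $e$ in $T'$ whose last write w.r.t. $T$ is $f$, $f$ is in $T'$ and is also the last write of $e$ w.r.t. $T'$; (iii) for any two acquires $e_1,e_2$ on the same lock with $e_1$ before $e_2$ in $T'$, the matching release of $e_1$ is in $T'$ and lies strictly between $e_1$ and $e_2$. *)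

theory Defs
  imports Main "HOL-Library.Sublist"
begin

datatype ('x, 'l) action = Rd 'x | Wr 'x | Acq 'l | Rel 'l

definition is_write :: "('ev \<Rightarrow> ('x,'l) action) \<Rightarrow> 'ev \<Rightarrow> bool" where
  "is_write act e \<longleftrightarrow> (\<exists>x. act e = Wr x)"

definition is_read :: "('ev \<Rightarrow> ('x,'l) action) \<Rightarrow> 'ev \<Rightarrow> bool" where
  "is_read act e \<longleftrightarrow> (\<exists>x. act e = Rd x)"

definition proj :: "('ev \<Rightarrow> 't) \<Rightarrow> 't \<Rightarrow> 'ev list \<Rightarrow> 'ev list" where
  "proj tid i T = filter (\<lambda>e. tid e = i) T"

definition lock_held :: "('ev \<Rightarrow> 't) \<Rightarrow> ('ev \<Rightarrow> ('x,'l) action) \<Rightarrow> 'ev list \<Rightarrow> nat \<Rightarrow> 'l \<Rightarrow> bool" where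
  "lock_held tid act T k y \<longleftrightarrow>
     (\<exists>i<k. act (T!i) = Acq y \<and>
        \<not> (\<exists>m. i < m \<and> m < k \<and> act (T!m) = Rel y \<and> tid (T!m) = tid (T!i)))"

definition well_formed :: "('ev \<Rightarrow> 't) \<Rightarrow> ('ev \<Rightarrow> ('x,'l) action) \<Rightarrow> 'ev list \<Rightarrow> bool" where
  "well_formed tid act T \<longleftrightarrow>
     distinct T \<and>
     (\<forall>k<length T. \<forall>y. act (T!k) = Acq y \<longrightarrow> \<not> lock_held tid act T k y) \<and>
     (\<forall>k<length T. \<forall>y. act (T!k) = Rel y \<longrightarrow>
        (\<exists>i<k. act (T!i) = Acq y \<and> tid (T!i) = tid (T!k) \<and>
           (\<forall>m. i < m \<and> m < k \<longrightarrow> act (T!m) \<noteq> Acq y)))"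

definition conflicting :: "('ev \<Rightarrow> 't) \<Rightarrow> ('ev \<Rightarrow> ('x,'l) action) \<Rightarrow> 'ev \<Rightarrow> 'ev \<Rightarrow> bool" where
  "conflicting tid act e f \<longleftrightarrow>
     tid e \<noteq> tid f \<and>
     (\<exists>x. (act e = Wr x \<and> act f = Wr x) \<or> (act e = Wr x \<and> act f = Rd x)
          \<or> (act e = Rd x \<and> act f = Wr x))"

definition before :: "'ev list \<Rightarrow> 'ev \<Rightarrow> 'ev \<Rightarrow> bool" where
  "before xs a b \<longleftrightarrow> (\<exists>i j. i < j \<and> j < length xs \<and> xs!i = a \<and> xs!j = b)"

definition imm_before :: "'ev list \<Rightarrow> 'ev \<Rightarrow> 'ev \<Rightarrow> bool" where
  "imm_before xs a b \<longleftrightarrow> (\<exists>i. Suc i < length xs \<and> xs!i = a \<and> xs!(Suc i) = b)"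

definition last_write :: "('ev \<Rightarrow> ('x,'l) action) \<Rightarrow> 'ev list \<Rightarrow> 'ev \<Rightarrow> 'ev \<Rightarrow> bool" where
  "last_write act xs e f \<longleftrightarrow>
     (\<exists>x i j. act e = Rd x \<and> act f = Wr x \<and> i < j \<and> j < length xs \<and> xs!i = f \<and> xs!j = e \<and>
        (\<forall>k. i < k \<and> k < j \<longrightarrow> act (xs!k) \<noteq> Wr x))"

definition matching_release :: "('ev \<Rightarrow> 't) \<Rightarrow> ('ev \<Rightarrow> ('x,'l) action) \<Rightarrow> 'ev list \<Rightarrow> 'ev \<Rightarrow> 'ev \<Rightarrow> bool" where
  "matching_release tid act T a r \<longleftrightarrow>
     (\<exists>y i j. act a = Acq y \<and> act r = Rel y \<and> tid a = tid r \<and>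
        i < j \<and> j < length T \<and> T!i = a \<and> T!j = r \<and>
        (\<forall>m. i < m \<and> m < j \<longrightarrow> act (T!m) \<noteq> Acq y \<and> act (T!m) \<noteq> Rel y))"

definition correct_reordered_prefix ::
  "('ev \<Rightarrow> 't) \<Rightarrow> ('ev \<Rightarrow> ('x,'l) action) \<Rightarrow> 'ev list \<Rightarrow> 'ev list \<Rightarrow> bool" where
  "correct_reordered_prefix tid act T T' \<longleftrightarrow>
     distinct T' \<and> set T' \<subseteq> set T \<and>
     (\<forall>i. prefix (proj tid i T') (proj tid i T)) \<and>
     (\<forall>e\<in>set T'. \<forall>f. last_write act T e f \<longrightarrow> f \<in> set T' \<and> last_write act T' e f) \<and>
     (\<forall>e1 e2 y. act e1 = Acq y \<and> act e2 = Acq y \<and> before T' e1 e2 \<longrightarrow>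
        (\<exists>r. matching_release tid act T e1 r \<and> r \<in> set T' \<and>
             before T' e1 r \<and> before T' r e2))"

end

theory Submission
  imports Defs
begin

lemma idx_in_prefix:
  assumes "distinct (P @ xs)" "j < length (P @ xs)" "(P @ xs) ! j = b" "b \<in> set P"
  shows "j < length P"
proof (rule ccontr)
  assume "\<not> j < length P"
  then have "b \<in> set xs" using assms by (auto simp: nth_append)
  then show False using assms by auto
qed

lemma before_app_D:
  assumes "distinct (P @ xs)" "before (P @ xs) a b" "b \<in> set P"
  shows "before P a b"
proof -
  obtain i j where ij: "i < j" "j < length (P@xs)" "(P@xs)!i = a" "(P@xs)!j = b"
    using assms(2) unfolding before_def by blast
  have j: "j < length P" using idx_in_prefix[OF assms(1) ij(2) ij(4) assms(3)] .
  have "P!i = a" "P!j = b" using ij j by (simp_all add: nth_append)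
  then show ?thesis unfolding before_def using ij(1) j by blast
qed

lemma before_app_I:
  assumes "before P a b" shows "before (P @ xs) a b"
proof -
  obtain i j where ij: "i < j" "j < length P" "P!i = a" "P!j = b"
    using assms unfolding before_def by blast
  have "(P@xs)!i = a" "(P@xs)!j = b" using ij by (simp_all add: nth_append)
  then show ?thesis unfolding before_def using ij(1,2) by (metis length_append trans_less_add1)
qed

lemma before_in: "before P a b \<Longrightarrow> a \<in> set P \<and> b \<in> set P"
  unfolding before_def by auto

lemma lw_app_D:
  assumes "distinct (P @ xs)" "last_write act (P @ xs) r w" "r \<in> set P"
  shows "last_write act P r w"
proof -
  obtain x i j where ij: "act r = Rd x" "act w = Wr x" "i < j" "j < length (P@xs)"
    "(P@xs)!i = w" "(P@xs)!j = r" "\<forall>k. i < k \<and> k < j \<longrightarrow> act ((P@xs)!k) \<noteq> Wr x"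
    using assms(2) unfolding last_write_def by blast
  have j: "j < length P" using idx_in_prefix[OF assms(1) ij(4) ij(6) assms(3)] .
  have "P!i = w" "P!j = r" using ij j by (simp_all add: nth_append)
  moreover have "\<forall>k. i < k \<and> k < j \<longrightarrow> act (P!k) \<noteq> Wr x"
    using ij(7) j by (simp add: nth_append)
  ultimately show ?thesis unfolding last_write_def using ij(1,2,3) j by blast
qed

lemma lw_app_I:
  assumes "last_write act P r w" shows "last_write act (P @ xs) r w"
proof -
  obtain x i j where ij: "act r = Rd x" "act w = Wr x" "i < j" "j < length P"
    "P!i = w" "P!j = r" "\<forall>k. i < k \<and> k < j \<longrightarrow> act (P!k) \<noteq> Wr x"
    using assms unfolding last_write_def by blast
  have "(P@xs)!i = w" "(P@xs)!j = r" using ij by (simp_all add: nth_append)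
  moreover have "\<forall>k. i < k \<and> k < j \<longrightarrow> act ((P@xs)!k) \<noteq> Wr x"
    using ij(7) ij(4) by (simp add: nth_append)
  moreover have "j < length (P@xs)" using ij(4) by simp
  ultimately show ?thesis unfolding last_write_def using ij(1,2,3) by blast
qed

lemma lw_in: "last_write act P r w \<Longrightarrow> r \<in> set P \<and> w \<in> set P \<and> is_read act r"
  unfolding last_write_def is_read_def by auto

lemma crpD:
  assumes "correct_reordered_prefix tid act T T'"
  shows "distinct T'" "set T' \<subseteq> set T" "\<forall>i. prefix (proj tid i T') (proj tid i T)"
    "\<forall>e\<in>set T'. \<forall>f. last_write act T e f \<longrightarrow> f \<in> set T' \<and> last_write act T' e f"
    "\<forall>e1 e2 y. act e1 = Acq y \<and> act e2 = Acq y \<and> before T' e1 e2 \<longrightarrow>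
        (\<exists>r. matching_release tid act T e1 r \<and> r \<in> set T' \<and>
             before T' e1 r \<and> before T' r e2)"
  using assms unfolding correct_reordered_prefix_def
  apply -
  apply (elim conjE, assumption)+
  done

lemma crpI:
  assumes "distinct T'" "set T' \<subseteq> set T" "\<forall>i. prefix (proj tid i T') (proj tid i T)"
    "\<forall>e\<in>set T'. \<forall>f. last_write act T e f \<longrightarrow> f \<in> set T' \<and> last_write act T' e f"
    "\<forall>e1 e2 y. act e1 = Acq y \<and> act e2 = Acq y \<and> before T' e1 e2 \<longrightarrow>
        (\<exists>r. matching_release tid act T e1 r \<and> r \<in> set T' \<and>
             before T' e1 r \<and> before T' r e2)"
  shows "correct_reordered_prefix tid act T T'"
  unfolding correct_reordered_prefix_def by (intro conjI assms)

lemma trunc: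
  assumes "correct_reordered_prefix tid act T (P @ xs)"
  shows "correct_reordered_prefix tid act T P"
proof -
  have d: "distinct (P @ xs)" using crpD[OF assms] by blast
  have pr: "prefix (proj tid i P) (proj tid i T)" for i
  proof -
    have "prefix (proj tid i P) (proj tid i (P @ xs))" unfolding proj_def by simp
    then show ?thesis using crpD[OF assms]
      using prefix_order.trans by blast
  qed
  have rd: "\<forall>e\<in>set P. \<forall>f. last_write act T e f \<longrightarrow> f \<in> set P \<and> last_write act P e f"
  proof (intro ballI allI impI)
    fix r w assume r: "r \<in> set P" and lw: "last_write act T r w"
    then have "last_write act (P @ xs) r w" using crpD[OF assms] by auto
    then have "last_write act P r w" using lw_app_D[OF d] r by blast
    then show "w \<in> set P \<and> last_write act P r w" using lw_in[of act P r w] by blast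
  qed
  have lk: "\<forall>e1 e2 y. act e1 = Acq y \<and> act e2 = Acq y \<and> before P e1 e2 \<longrightarrow>
        (\<exists>r. matching_release tid act T e1 r \<and> r \<in> set P \<and>
             before P e1 r \<and> before P r e2)"
  proof (intro allI impI)
    fix e1 e2 y assume h: "act e1 = Acq y \<and> act e2 = Acq y \<and> before P e1 e2"
    then have "before (P@xs) e1 e2" using before_app_I[of P e1 e2 xs] by blast
    then obtain r where r: "matching_release tid act T e1 r" "before (P@xs) e1 r" "before (P@xs) r e2"
      using crpD(5)[OF assms] h by blast
    have e2: "e2 \<in> set P" using before_in[of P e1 e2] h by simp
    have b2: "before P r e2" using before_app_D[OF d r(3) e2] .
    then have rP: "r \<in> set P" using before_in[of P r e2] by simp
    have b1: "before P e1 r" using before_app_D[OF d r(2) rP] .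
    show "\<exists>r. matching_release tid act T e1 r \<and> r \<in> set P \<and> before P e1 r \<and> before P r e2"
      using r(1) rP b1 b2 by blast
  qed
  have "set P \<subseteq> set T" using crpD[OF assms] by auto
  moreover have "distinct P" using d by simp
  moreover have "\<forall>i. prefix (proj tid i P) (proj tid i T)" using pr by blast
  ultimately show ?thesis using rd lk by (intro crpI)
qed

lemma swap:
  assumes c: "correct_reordered_prefix tid act T (P @ [e, f])"
    and we: "is_write act e" and wf: "is_write act f" and t: "tid e \<noteq> tid f"
  shows "correct_reordered_prefix tid act T (P @ [f, e])"
proof -
  have d: "distinct (P @ [e,f])" using crpD(1)[OF c] .
  have d2: "distinct (P @ [f,e])" using d by auto
  have pj: "proj tid i (P @ [f, e]) = proj tid i (P @ [e, f])" for i
    unfolding proj_def using t by auto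
  have ne: "\<not> is_read act e" "\<not> is_read act f" "act e \<noteq> Acq y" "act f \<noteq> Acq y" for y
    using we wf unfolding is_read_def is_write_def by auto
  have rd: "\<forall>r\<in>set (P@[f,e]). \<forall>w. last_write act T r w \<longrightarrow> w \<in> set (P@[f,e]) \<and> last_write act (P@[f,e]) r w"
  proof (intro ballI allI impI)
    fix r w assume r: "r \<in> set (P@[f,e])" and lw: "last_write act T r w"
    then have r': "r \<in> set (P@[e,f])" by auto
    then have L: "last_write act (P @ [e,f]) r w" using crpD(4)[OF c] lw r' by blast
    have "r \<in> set P" using lw_in[OF L] r ne by auto
    then have "last_write act P r w" using lw_app_D[OF d L] by blast
    then show "w \<in> set (P@[f,e]) \<and> last_write act (P@[f,e]) r w" using lw_in[of act P r w] lw_app_I[of act P r w "[f,e]"] by simp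
  qed
  have lk: "\<forall>e1 e2 y. act e1 = Acq y \<and> act e2 = Acq y \<and> before (P@[f,e]) e1 e2 \<longrightarrow>
        (\<exists>r. matching_release tid act T e1 r \<and> r \<in> set (P@[f,e]) \<and>
             before (P@[f,e]) e1 r \<and> before (P@[f,e]) r e2)"
  proof (intro allI impI)
    fix e1 e2 y assume h: "act e1 = Acq y \<and> act e2 = Acq y \<and> before (P@[f,e]) e1 e2"
    have e2a: "e2 \<in> set (P@[f,e])" using h before_in[of "P@[f,e]" e1 e2] by blast
    have "e2 \<noteq> e" "e2 \<noteq> f" using h ne(3,4)[of y] by metis+
    then have e2: "e2 \<in> set P" using e2a by simp
    have "before P e1 e2" using before_app_D[OF d2 _ e2] h by blast
    then have "before (P@[e,f]) e1 e2" by (rule before_app_I)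
    then obtain r where r: "matching_release tid act T e1 r" "before (P@[e,f]) e1 r" "before (P@[e,f]) r e2"
      using crpD(5)[OF c] h by blast
    have b2: "before P r e2" using before_app_D[OF d r(3) e2] .
    then have rP: "r \<in> set P" using before_in[of P r e2] by simp
    have b1: "before P e1 r" using before_app_D[OF d r(2) rP] .
    show "\<exists>r. matching_release tid act T e1 r \<and> r \<in> set (P@[f,e]) \<and> before (P@[f,e]) e1 r \<and> before (P@[f,e]) r e2"
      using r(1) rP before_app_I[OF b1, of "[f,e]"] before_app_I[OF b2, of "[f,e]"] by (metis UnCI set_append)
  qed
  have "set (P@[f,e]) \<subseteq> set T" using crpD(2)[OF c] by auto
  moreover have "\<forall>i. prefix (proj tid i (P@[f,e])) (proj tid i T)"
    using crpD(3)[OF c] pj by simp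
  ultimately show ?thesis by (intro crpI[OF d2 _ _ rd lk])
qed

theorem mainTheorem9:
  fixes tid :: "'ev \<Rightarrow> 't" and act :: "'ev \<Rightarrow> ('x, 'l) action"
    and T :: "'ev list" and e f :: 'ev
  assumes "well_formed tid act T"
    and "e \<in> set T" and "f \<in> set T"
    and "is_write act e" and "is_write act f"
    and "conflicting tid act e f"
    and "\<exists>T'. correct_reordered_prefix tid act T T' \<and> imm_before T' e f"
  shows "\<exists>T''. correct_reordered_prefix tid act T T'' \<and> imm_before T'' f e"
proof -
  obtain T' i where c: "correct_reordered_prefix tid act T T'" and i: "Suc i < length T'"
    "T'!i = e" "T'!Suc i = f"
    using assms(7) unfolding imm_before_def by blast
  have eq: "T' = (take i T' @ [e, f]) @ drop (Suc (Suc i)) T'"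
  proof -
    have "T' = take i T' @ drop i T'" by simp
    also have "drop i T' = e # drop (Suc i) T'" using i by (metis Cons_nth_drop_Suc Suc_lessD)
    also have "drop (Suc i) T' = f # drop (Suc (Suc i)) T'" using i by (metis Cons_nth_drop_Suc)
    finally show ?thesis by simp
  qed
  have c2: "correct_reordered_prefix tid act T ((take i T' @ [e, f]) @ drop (Suc (Suc i)) T')"
    using c by (subst eq[symmetric])
  have t: "tid e \<noteq> tid f" using assms(6) unfolding conflicting_def by (elim conjE)
  have "correct_reordered_prefix tid act T (take i T' @ [f, e])"
    by (rule swap[OF trunc[OF c2] assms(4,5) t])
  moreover have "imm_before (take i T' @ [f, e]) f e"
  proof -
    have l: "length (take i T') = i" using i(1) by simp
    have "(take i T' @ [f, e]) ! i = f" using l by (metis nth_append_length)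
    moreover have "(take i T' @ [f, e]) ! Suc i = e" using l
      by (metis append_Cons append_Nil append_assoc length_append_singleton nth_append_length)
    moreover have "Suc i < length (take i T' @ [f, e])" using l by simp
    ultimately show ?thesis unfolding imm_before_def by blast
  qed
  ultimately show ?thesis by blast
qed

end
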